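(* In the setting described in the context, let $\rho\in\widehat\Lambda$, $\chi\in\widehat\Gamma$, $1\le i,i_1,\dots,i_t\le n$ with $t\ge1$, and $u=u_{i_1}\cdots u_{i_t}$. Then, in the left $U$-module $A^*$ with action $\cdot_\rho$, (a) $u_i\cdot_\rho\widetilde\chi=(1-\rho(z_i)\chi(g_i))\,\Phi(u_i)\widetilde\chi$; (b) $u_i\cdot_\rho(\Phi(u)\widetilde\chi)=\Phi\Big(u_iu-\prod_{r=1}^t q_{ii_r}\,\rho(z_i)\chi(g_i)\,uu_i\Big)\widetilde\chi$; (c) $u_i^t\cdot_\rho\widetilde\chi=\prod_{l=0}^{t-1}\big(1-q_{ii}^l\rho(z_i)\chi(g_i)\big)\,\Phi(u_i^t)\widetilde\chi$.
   Context: $k$ is an algebraically closed field of characteristic zero; for an abelian group $G$, $\widehat G$ is its group of characters $G\to k^\times$. A Yetter–Drinfeld module over $k[G]$ is a $G$-graded vector space $X=\bigoplus_g X_g$ with a $G$-action preserving each $X_g$; $X_g^{\psi}=\{x\in X_g: h\cdot x=\psi(h)x\ \forall h\}$; braiding $c(x\otimes y)=(g\cdot y)\otimes x$ for $x\in X_g$. The Nichols algebra $\mathfrak B(X)$ is the unique connected $\mathbb N$-graded braided Hopf algebra in this category generated by its degree-one part $\cong X$, which equals its space of primitive elements. The smash product $\mathfrak B(X)\#k[G]$ is the Hopf algebra containing $\mathfrak B(X)$ and $k[G]$ as subalgebras, with $gxg^{-1}=\psi(g)x$, $\Delta(x)=g'\otimes x+x\otimes1$ for $x\in X_{g'}^{\psi}$,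 and $\Delta(g)=g\otimes g$. Setting: $\Lambda,\Gamma$ abelian groups, $n\ge1$, $z_1,\dots,z_n\in\Lambda$, $g_1,\dots,g_n\in\Gamma$, nontrivial characters $\eta_1,\dots,\eta_n\in\widehat\Lambda$, $\chi_1,\dots,\chi_n\in\widehat\Gamma$. $W$ is the Yetter–Drinfeld module over $k[\Lambda]$ with basis $u_i\in W_{z_i}^{\eta_i}$, $V$ the one over $k[\Gamma]$ with basis $a_i\in V_{g_i}^{\chi_i}$; $U=\mathfrak B(W)\#k[\Lambda]$, $A=\mathfrak B(V)\#k[\Gamma]$; $q_{ij}=\eta_j(z_i)$. For $\psi\in\widehat\Gamma$ (resp. $\widehat\Lambda$), $\widetilde\psi$ is the algebra map $A\to k$ (resp. $U\to k$) with $\widetilde\psi(g)=\psi(g)$ and vanishing on the $a_j$ (resp. $u_j$). Let $\varphi:\Lambda\to\widehat\Gamma$ be a group homomorphism with $\varphi(z_i)=\chi_i^{-1}$ and $\eta_i(z)=\varphi(z)(g_i)$ for all $i$ and $z\in\Lambda$, and let $l_1,\dots,l_n\in k$ be nonzero. Then there is a Hopf algebra map $\Phi:U\to A^{o\,\mathrm{cop}}$ with $\Phi(z)=\widetilde{\varphi(z)}$, $\Phi(u_i)(g)=0$, $\Phi(u_i)(a_j)=\delta_{ij}l_i$. The dual $A^*$ is an algebra under convolution $(pq)(a)=p(a_{(1)})q(a_{(2)})$ (so $\Phi(u)\widetilde\chi$ is a product in $A^*$). For $\rho\in\widehat\Lambda$, $U$ acts on $A^*$ by $u\cdot_\rho p=\Phi(u_{(1)})\,\widetilde\rho(u_{(2)})\,p\,\Phi(S(u_{(3)}))$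 (products in $A^*$). *)

theory Defs
  imports "HOL-Computational_Algebra.Polynomial"
begin

text \<open>Groups Lambda, Gamma are written additively (type class ab_group_add).
  A character of an abelian group with values in k^x.\<close>

definition is_char :: "('a::ab_group_add \<Rightarrow> 'k::field) \<Rightarrow> bool" where
  "is_char \<psi> \<longleftrightarrow> (\<forall>x y. \<psi> (x + y) = \<psi> x * \<psi> y) \<and> (\<forall>x. \<psi> x \<noteq> 0)"

text \<open>Coproduct of the basis element a_w (w a word in the generators) of the smash
  product T(V)#k[G], with a_j of degree gg j and weight ch j:
  Delta(a_w) = sum of c * (a_w1 * s) (x) a_w2 over the listed quadruples (c, w1, s, w2).\<close>

fun cop :: "('i \<Rightarrow> 'g::ab_group_add) \<Rightarrow> ('i \<Rightarrow> 'g \<Rightarrow> 'k::comm_ring_1) \<Rightarrow> 'i list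
             \<Rightarrow> ('k \<times> 'i list \<times> 'g \<times> 'i list) list" where
  "cop gg ch [] = [(1, [], 0, [])]"
| "cop gg ch (x # w) =
     map (\<lambda>(c, w1, s, w2). (c * prod_list (map (\<lambda>y. ch y (gg x)) w1), w1, gg x + s, x # w2))
         (cop gg ch w)
   @ map (\<lambda>(c, w1, s, w2). (c, x # w1, s, w2)) (cop gg ch w)"

text \<open>A linear functional p on the smash product is given by its values p w h = p(a_w h)
  on the basis {a_w h}. Convolution product of functionals.\<close>

definition conv :: "('i \<Rightarrow> 'g::ab_group_add) \<Rightarrow> ('i \<Rightarrow> 'g \<Rightarrow> 'k::comm_ring_1)
    \<Rightarrow> ('i list \<Rightarrow> 'g \<Rightarrow> 'k) \<Rightarrow> ('i list \<Rightarrow> 'g \<Rightarrow> 'k) \<Rightarrow> ('i list \<Rightarrow> 'g \<Rightarrow> 'k)" where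
  "conv gg ch p q = (\<lambda>w h. sum_list (map (\<lambda>(c, w1, s, w2). c * p w1 (s + h) * q w2 h) (cop gg ch w)))"

definition unit_f :: "'i list \<Rightarrow> 'g \<Rightarrow> 'k::comm_ring_1" where
  "unit_f w h = (if w = [] then 1 else 0)"

definition tilde :: "('g \<Rightarrow> 'k::comm_ring_1) \<Rightarrow> 'i list \<Rightarrow> 'g \<Rightarrow> 'k" where
  "tilde \<psi> w h = (if w = [] then \<psi> h else 0)"

definition smultf :: "'k::comm_ring_1 \<Rightarrow> ('i list \<Rightarrow> 'g \<Rightarrow> 'k) \<Rightarrow> 'i list \<Rightarrow> 'g \<Rightarrow> 'k" where
  "smultf c p = (\<lambda>w h. c * p w h)"

definition prodf :: "('i \<Rightarrow> 'g::ab_group_add) \<Rightarrow> ('i \<Rightarrow> 'g \<Rightarrow> 'k::comm_ring_1)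
    \<Rightarrow> ('i list \<Rightarrow> 'g \<Rightarrow> 'k) list \<Rightarrow> 'i list \<Rightarrow> 'g \<Rightarrow> 'k" where
  "prodf gg ch ps = foldr (conv gg ch) ps unit_f"

text \<open>Phi on the basis element u_w * lam of U (Phi is an algebra map; Phiu j = Phi(u_j),
  Phi(lam) = tilde (phi lam)).\<close>
definition PhiU where
  "PhiU gg ch \<phi> Phiu w lam = conv gg ch (prodf gg ch (map Phiu w)) (tilde (\<phi> lam))"

text \<open>Phi(S(u_w lam)), where S(u_w lam) = lam^{-1} S(u_wm) ... S(u_w1) and
  S(u_j) = - z_j^{-1} u_j.\<close>
definition PhiSU where
  "PhiSU gg ch zs \<phi> Phiu w lam =
     smultf ((-1) ^ length w)
       (conv gg ch (tilde (\<phi> (- lam)))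
          (prodf gg ch (map (\<lambda>j. conv gg ch (tilde (\<phi> (- zs j))) (Phiu j)) (rev w))))"

text \<open>Phi applied to a linear combination of basis elements u_w lam of U.\<close>
definition PhiComb where
  "PhiComb gg ch \<phi> Phiu X = (\<lambda>x h. sum_list (map (\<lambda>(c, w, lam). c * PhiU gg ch \<phi> Phiu w lam x h) X))"

text \<open>The action u .rho p = Phi(u(1)) tilde rho (u(2)) p Phi(S(u(3))) for u = u_w lam,
  using Delta^(2) = (Delta (x) id) Delta on U = B(W)#k[Lambda].\<close>
definition act_term where
  "act_term gg ch zs et \<phi> Phiu \<rho> w lam p = (\<lambda>x h.
     sum_list (map (\<lambda>(c1, w1, s, w2).
       sum_list (map (\<lambda>(c2, v1, s2, v2).
          c1 * c2 * (if v2 = [] then \<rho> (s + lam) else 0) *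
          conv gg ch (conv gg ch (PhiU gg ch \<phi> Phiu v1 (s2 + s + lam)) p)
                     (PhiSU gg ch zs \<phi> Phiu w2 lam) x h)
         (cop zs et w1)))
      (cop zs et w)))"

definition act where
  "act gg ch zs et \<phi> Phiu \<rho> X p =
     (\<lambda>x h. sum_list (map (\<lambda>(c, w, lam). c * act_term gg ch zs et \<phi> Phiu \<rho> w lam p x h) X))"

end

theory Submission
  imports Defs
begin

lemma cop_split:
  "(c, w1, s, w2) \<in> set (cop gg ch w) \<Longrightarrow>
     s = sum_list (map gg w2) \<and> sum_list (map gg w) = sum_list (map gg w1) + sum_list (map gg w2)
     \<and> (\<forall>f::_ \<Rightarrow> 'k::comm_ring_1. prod_list (map f w) = prod_list (map f w1) * prod_list (map f w2))"
proof (induction w arbitrary: c w1 s w2)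
  case Nil then show ?case by auto
next
  case (Cons x w)
  from Cons.prems show ?case
    by (auto dest!: Cons.IH simp: algebra_simps)
qed

lemma cop_right_empty:
  "sum_list (map (\<lambda>(c, w1, s, w2). if w2 = [] then G c w1 s else 0) (cop gg ch w)) = G 1 w 0"
proof (induction w arbitrary: G)
  case Nil then show ?case by simp
next
  case (Cons x w)
  have "sum_list (map (\<lambda>(c, w1, s, w2). if w2 = [] then G c w1 s else 0) (cop gg ch (x # w)))
     = sum_list (map (\<lambda>(c, w1, s, w2). if w2 = [] then G c (x # w1) s else 0) (cop gg ch w))"
    by (simp add: map_map o_def case_prod_unfold cong: if_cong)
  also have "\<dots> = G 1 (x # w) 0" using Cons.IH[of "\<lambda>c v s. G c (x # v) s"] by simp
  finally show ?case .
qed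

lemma cop_left_empty:
  "sum_list (map (\<lambda>(c, w1, s, w2). if w1 = [] then G c s w2 else 0) (cop gg ch w))
     = G 1 (sum_list (map gg w)) w"
proof (induction w arbitrary: G)
  case Nil then show ?case by simp
next
  case (Cons x w)
  have "sum_list (map (\<lambda>(c, w1, s, w2). if w1 = [] then G c s w2 else 0) (cop gg ch (x # w)))
     = sum_list (map (\<lambda>(c, w1, s, w2). if w1 = [] then G c (gg x + s) (x # w2) else 0) (cop gg ch w))"
    by (simp add: map_map o_def case_prod_unfold cong: if_cong)
  also have "\<dots> = G 1 (sum_list (map gg (x # w))) (x # w)" using Cons.IH[of "\<lambda>c s v. G c (gg x + s) (x # v)"] by simp
  finally show ?case .
qed


definition chw :: "('i \<Rightarrow> 'g \<Rightarrow> 'k::comm_ring_1) \<Rightarrow> 'i list \<Rightarrow> 'g \<Rightarrow> 'k" where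
  "chw ch u g = prod_list (map (\<lambda>y. ch y g) u)"

lemma conv_cons:
  "conv gg ch p q (x # w) H =
     conv gg ch (\<lambda>u H. chw ch u (gg x) * p u (gg x + H)) (\<lambda>u H. q (x # u) H) w H
   + conv gg ch (\<lambda>u H. p (x # u) H) q w H"
  by (simp add: conv_def chw_def map_map o_def case_prod_unfold algebra_simps)

lemma conv_shift:
  "chw ch w g * conv gg ch p q w (g + H) =
     conv gg ch (\<lambda>u H. chw ch u g * p u (g + H)) (\<lambda>u H. chw ch u g * q u (g + H)) w H"
proof -
  have "chw ch w g * conv gg ch p q w (g + H) =
    sum_list (map (\<lambda>(c, w1, s, w2). chw ch w g * (c * p w1 (s + (g + H)) * q w2 (g + H))) (cop gg ch w))"
    by (simp add: conv_def sum_list_const_mult[symmetric] case_prod_unfold)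
  also have "\<dots> = conv gg ch (\<lambda>u H. chw ch u g * p u (g + H)) (\<lambda>u H. chw ch u g * q u (g + H)) w H"
    unfolding conv_def
  proof (intro arg_cong[where f=sum_list] map_cong refl, clarify)
    fix c w1 s w2 assume "(c, w1, s, w2) \<in> set (cop gg ch w)"
    from cop_split[OF this] have "chw ch w g = chw ch w1 g * chw ch w2 g" unfolding chw_def by blast
    then show "chw ch w g * (c * p w1 (s + (g + H)) * q w2 (g + H)) =
         c * (chw ch w1 g * p w1 (g + (s + H))) * (chw ch w2 g * q w2 (g + H))"
      by (simp add: algebra_simps)
  qed
  finally show ?thesis .
qed

lemma conv_add_left:
  "conv gg ch (\<lambda>u H. p u H + p' u H) q = (\<lambda>w h. conv gg ch p q w h + conv gg ch p' q w h)"
  by (simp add: conv_def fun_eq_iff case_prod_unfold algebra_simps sum_list_addf)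

lemma conv_add_right:
  "conv gg ch q (\<lambda>u H. p u H + p' u H) = (\<lambda>w h. conv gg ch q p w h + conv gg ch q p' w h)"
  by (simp add: conv_def fun_eq_iff case_prod_unfold algebra_simps sum_list_addf)

lemma conv_smult_left: "conv gg ch (smultf a p) q = smultf a (conv gg ch p q)"
  by (simp add: conv_def smultf_def fun_eq_iff case_prod_unfold sum_list_const_mult[symmetric] algebra_simps)

lemma conv_smult_right: "conv gg ch p (smultf a q) = smultf a (conv gg ch p q)"
  by (simp add: conv_def smultf_def fun_eq_iff case_prod_unfold sum_list_const_mult[symmetric] algebra_simps)

lemma conv_assoc_pt:
  "conv gg ch (conv gg ch p q) r w h = conv gg ch p (conv gg ch q r) w h"
proof (induction w arbitrary: p q r h)
  case Nil then show ?case by (simp add: conv_def)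
next
  case (Cons x w)
  define p1 where "p1 = (\<lambda>u H. p (x # u) H)"
  define p2 where "p2 = (\<lambda>u H. chw ch u (gg x) * p u (gg x + H))"
  define q2 where "q2 = (\<lambda>u H. q (x # u) H)"
  define q3 where "q3 = (\<lambda>u H. chw ch u (gg x) * q u (gg x + H))"
  define r3 where "r3 = (\<lambda>u H. r (x # u) H)"
  have L: "conv gg ch (conv gg ch p q) r (x # w) h =
     conv gg ch (conv gg ch p2 q3) r3 w h + (conv gg ch (conv gg ch p2 q2) r w h + conv gg ch (conv gg ch p1 q) r w h)"
  proof -
    have "conv gg ch (conv gg ch p q) r (x # w) h =
      conv gg ch (\<lambda>u H. chw ch u (gg x) * conv gg ch p q u (gg x + H)) r3 w h
      + conv gg ch (\<lambda>u H. conv gg ch p q (x # u) H) r w h"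
      unfolding r3_def by (rule conv_cons)
    also have "(\<lambda>u H. chw ch u (gg x) * conv gg ch p q u (gg x + H)) = conv gg ch p2 q3"
      unfolding p2_def q3_def by (simp add: conv_shift)
    also have "(\<lambda>u H. conv gg ch p q (x # u) H) = (\<lambda>u H. conv gg ch p2 q2 u H + conv gg ch p1 q u H)"
      unfolding p1_def p2_def q2_def by (simp add: conv_cons)
    finally show ?thesis by (simp add: conv_add_left)
  qed
  have R: "conv gg ch p (conv gg ch q r) (x # w) h =
     conv gg ch p2 (conv gg ch q3 r3) w h + (conv gg ch p2 (conv gg ch q2 r) w h + conv gg ch p1 (conv gg ch q r) w h)"
  proof -
    have "conv gg ch p (conv gg ch q r) (x # w) h =
      conv gg ch p2 (\<lambda>u H. conv gg ch q r (x # u) H) w h + conv gg ch p1 (conv gg ch q r) w h"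
      unfolding p1_def p2_def by (rule conv_cons)
    also have "(\<lambda>u H. conv gg ch q r (x # u) H) = (\<lambda>u H. conv gg ch q3 r3 u H + conv gg ch q2 r u H)"
      unfolding q2_def q3_def r3_def by (simp add: conv_cons)
    finally show ?thesis by (simp add: conv_add_right)
  qed
  show ?case unfolding L R Cons.IH ..
qed

lemma conv_assoc: "conv gg ch (conv gg ch p q) r = conv gg ch p (conv gg ch q r)"
  by (simp add: fun_eq_iff conv_assoc_pt)


lemma conv_tilde_left:
  "conv gg ch (tilde \<psi>) f w h = \<psi> (sum_list (map gg w) + h) * f w h"
proof -
  have "conv gg ch (tilde \<psi>) f w h =
    sum_list (map (\<lambda>(c, w1, s, w2). if w1 = [] then c * \<psi> (s + h) * f w2 h else 0) (cop gg ch w))"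
    unfolding conv_def tilde_def by (intro arg_cong[where f=sum_list] map_cong refl) auto
  also have "\<dots> = \<psi> (sum_list (map gg w) + h) * f w h"
    by (subst cop_left_empty[where G="\<lambda>c s v. c * \<psi> (s + h) * f v h"]) simp
  finally show ?thesis .
qed

lemma conv_tilde_right:
  "conv gg ch f (tilde \<psi>) w h = f w h * \<psi> h"
proof -
  have "conv gg ch f (tilde \<psi>) w h =
    sum_list (map (\<lambda>(c, w1, s, w2). if w2 = [] then c * f w1 (s + h) * \<psi> h else 0) (cop gg ch w))"
    unfolding conv_def tilde_def by (intro arg_cong[where f=sum_list] map_cong refl) auto
  also have "\<dots> = f w h * \<psi> h"
    by (subst cop_right_empty[where G="\<lambda>c v s. c * f v (s + h) * \<psi> h"]) simp
  finally show ?thesis .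
qed

lemma unit_tilde: "unit_f = tilde (\<lambda>_. 1)"
  by (simp add: fun_eq_iff unit_f_def tilde_def)

lemma conv_unit_left: "conv gg ch unit_f f = f"
  by (simp add: fun_eq_iff unit_tilde conv_tilde_left)

lemma conv_unit_right: "conv gg ch f unit_f = f"
  by (simp add: fun_eq_iff unit_tilde conv_tilde_right)

lemma conv_tilde_tilde: "conv gg ch (tilde a) (tilde b) = tilde (\<lambda>x. a x * b x)"
  by (simp add: fun_eq_iff conv_tilde_right tilde_def)

lemma prodf_Cons: "prodf gg ch (p # ps) = conv gg ch p (prodf gg ch ps)"
  by (simp add: prodf_def)

lemma prodf_Nil: "prodf gg ch [] = unit_f"
  by (simp add: prodf_def)

lemma prodf_append: "prodf gg ch (ps @ qs) = conv gg ch (prodf gg ch ps) (prodf gg ch qs)"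
  by (induction ps) (simp_all add: prodf_Cons prodf_Nil conv_unit_left conv_assoc)

lemma sum_list_nz: "sum_list (map f xs) \<noteq> (0::'a::comm_monoid_add) \<Longrightarrow> \<exists>x\<in>set xs. f x \<noteq> 0"
  by (induction xs) auto

definition homog :: "('i \<Rightarrow> 'g::ab_group_add) \<Rightarrow> 'g \<Rightarrow> ('i list \<Rightarrow> 'g \<Rightarrow> 'k::comm_ring_1) \<Rightarrow> bool" where
  "homog gg d f \<longleftrightarrow> (\<forall>w h. f w h \<noteq> 0 \<longrightarrow> sum_list (map gg w) = d)"

lemma homog_conv:
  assumes "homog gg d1 p" "homog gg d2 q"
  shows "homog gg (d1 + d2) (conv gg ch p q)"
  unfolding homog_def
proof (intro allI impI)
  fix w h assume "conv gg ch p q w h \<noteq> 0"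
  then obtain c w1 s w2 where m: "(c, w1, s, w2) \<in> set (cop gg ch w)" and "c * p w1 (s + h) * q w2 h \<noteq> 0"
    unfolding conv_def by (fastforce dest: sum_list_nz)
  then have "p w1 (s + h) \<noteq> 0" "q w2 h \<noteq> 0" by auto
  with assms have "sum_list (map gg w1) = d1" "sum_list (map gg w2) = d2" unfolding homog_def by auto
  with cop_split[OF m] show "sum_list (map gg w) = d1 + d2" by auto
qed

lemma homog_tilde: "homog gg 0 (tilde \<psi>)"
  by (simp add: homog_def tilde_def)

lemma homog_unit: "homog gg 0 unit_f"
  by (simp add: homog_def unit_f_def)

lemma homog_smult: "homog gg d f \<Longrightarrow> homog gg d (smultf a f)"
  by (simp add: homog_def smultf_def) (metis mult_zero_right)

lemma homog_prodf:
  assumes "\<And>j. homog gg (gs j) (F j)"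
  shows "homog gg (sum_list (map gs w)) (prodf gg ch (map F w))"
  by (induction w) (simp_all add: prodf_Cons prodf_Nil homog_unit homog_conv assms)

lemma tilde_commute:
  assumes "homog gg d f" "\<And>a b. \<psi> (a + b) = \<psi> a * \<psi> b"
  shows "conv gg ch (tilde \<psi>) f = smultf (\<psi> d) (conv gg ch f (tilde \<psi>))"
proof (intro ext)
  fix w h
  show "conv gg ch (tilde \<psi>) f w h = smultf (\<psi> d) (conv gg ch f (tilde \<psi>)) w h"
  proof (cases "f w h = 0")
    case True then show ?thesis by (simp add: conv_tilde_left conv_tilde_right smultf_def)
  next
    case False
    with assms(1) have "sum_list (map gg w) = d" by (auto simp: homog_def)
    then show ?thesis by (simp add: conv_tilde_left conv_tilde_right smultf_def assms(2))
  qed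
qed


lemma act_term_simp:
  "act_term gg ch zs et \<phi> Phiu \<rho> w lam p = (\<lambda>x h.
     sum_list (map (\<lambda>(c, w1, s, w2). c * \<rho> (s + lam) *
          conv gg ch (conv gg ch (PhiU gg ch \<phi> Phiu w1 (s + lam)) p) (PhiSU gg ch zs \<phi> Phiu w2 lam) x h)
       (cop zs et w)))"
  unfolding act_term_def
proof (intro ext arg_cong[where f=sum_list] map_cong refl, clarify)
  fix x h c w1 s w2
  show "sum_list (map (\<lambda>(c2, v1, s2, v2). c * c2 * (if v2 = [] then \<rho> (s + lam) else 0) *
            conv gg ch (conv gg ch (PhiU gg ch \<phi> Phiu v1 (s2 + s + lam)) p) (PhiSU gg ch zs \<phi> Phiu w2 lam) x h)
          (cop zs et w1)) =
        c * \<rho> (s + lam) * conv gg ch (conv gg ch (PhiU gg ch \<phi> Phiu w1 (s + lam)) p) (PhiSU gg ch zs \<phi> Phiu w2 lam) x h"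
    using cop_right_empty[where G="\<lambda>c2 v1 s2. c * c2 * \<rho> (s + lam) *
            conv gg ch (conv gg ch (PhiU gg ch \<phi> Phiu v1 (s2 + s + lam)) p) (PhiSU gg ch zs \<phi> Phiu w2 lam) x h"
       and gg=zs and ch=et and w=w1]
    by (simp add: if_distrib if_distribR cong: if_cong)
qed

lemma act_single: "act gg ch zs et \<phi> Phiu \<rho> [(1, w, 0)] p = act_term gg ch zs et \<phi> Phiu \<rho> w 0 p"
  by (simp add: act_def fun_eq_iff)

lemma sum_list_zeros: "sum_list (map (\<lambda>_. 0::'a::comm_monoid_add) xs) = 0"
  by (induction xs) auto

lemma conv_sum_left:
  "conv gg ch (\<lambda>u H. sum_list (map (\<lambda>e. F e u H) L)) r = (\<lambda>u H. sum_list (map (\<lambda>e. conv gg ch (F e) r u H) L))"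
proof (induction L)
  case Nil then show ?case by (simp add: conv_def fun_eq_iff case_prod_unfold sum_list_zeros)
next
  case (Cons a L)
  have "conv gg ch (\<lambda>u H. sum_list (map (\<lambda>e. F e u H) (a # L))) r
      = conv gg ch (\<lambda>u H. F a u H + sum_list (map (\<lambda>e. F e u H) L)) r" by simp
  also have "\<dots> = (\<lambda>u H. conv gg ch (F a) r u H + conv gg ch (\<lambda>u H. sum_list (map (\<lambda>e. F e u H) L)) r u H)"
    by (rule conv_add_left)
  finally show ?case using Cons by simp
qed

lemma conv_sum_right:
  "conv gg ch r (\<lambda>u H. sum_list (map (\<lambda>e. F e u H) L)) = (\<lambda>u H. sum_list (map (\<lambda>e. conv gg ch r (F e) u H) L))"
proof (induction L)
  case Nil then show ?case by (simp add: conv_def fun_eq_iff case_prod_unfold sum_list_zeros)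
next
  case (Cons a L)
  have "conv gg ch r (\<lambda>u H. sum_list (map (\<lambda>e. F e u H) (a # L)))
      = conv gg ch r (\<lambda>u H. F a u H + sum_list (map (\<lambda>e. F e u H) L))" by simp
  also have "\<dots> = (\<lambda>u H. conv gg ch r (F a) u H + conv gg ch r (\<lambda>u H. sum_list (map (\<lambda>e. F e u H) L)) u H)"
    by (rule conv_add_right)
  finally show ?case using Cons by simp
qed

lemma smultf_smultf: "smultf a (smultf b f) = smultf (a * b) f"
  by (simp add: smultf_def fun_eq_iff)

lemma smultf_one: "smultf 1 f = f"
  by (simp add: smultf_def fun_eq_iff)


lemma prodf_single: "prodf gg ch [p] = p"
  by (simp add: prodf_Cons prodf_Nil conv_unit_right)

lemma conv_neg_right: "conv gg ch p (\<lambda>w h. - q w h) = (\<lambda>w h. - conv gg ch p q w h)"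
  using conv_smult_right[of gg ch p "-1" q] by (simp add: smultf_def)

lemma char_add: "is_char \<psi> \<Longrightarrow> \<psi> (a + b) = \<psi> a * \<psi> b"
  by (simp add: is_char_def)

lemma char_zero: "is_char (\<psi> :: 'a::ab_group_add \<Rightarrow> 'k::field) \<Longrightarrow> \<psi> 0 = 1"
proof -
  assume c: "is_char \<psi>"
  have "\<psi> 0 * \<psi> 0 = \<psi> 0 * 1" using char_add[OF c, of 0 0] by simp
  moreover have "\<psi> 0 \<noteq> 0" using c by (simp add: is_char_def)
  ultimately show ?thesis by (metis mult_left_cancel)
qed

lemma char_sum: "is_char \<psi> \<Longrightarrow> \<psi> (sum_list (map gs w)) = prod_list (map (\<lambda>r. \<psi> (gs r)) w)"
  by (induction w) (simp_all add: char_zero char_add)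

locale setting =
  fixes gs :: "'i \<Rightarrow> 'g::ab_group_add" and chis :: "'i \<Rightarrow> 'g \<Rightarrow> 'k::field"
    and zs :: "'i \<Rightarrow> 'l::ab_group_add" and etas :: "'i \<Rightarrow> 'l \<Rightarrow> 'k"
    and \<phi> :: "'l \<Rightarrow> 'g \<Rightarrow> 'k" and Phiu :: "'i \<Rightarrow> 'i list \<Rightarrow> 'g \<Rightarrow> 'k" and \<rho> :: "'l \<Rightarrow> 'k"
  assumes chi_char: "\<And>j. is_char (chis j)"
    and phi_char: "\<And>z. is_char (\<phi> z)"
    and phi_hom: "\<And>z z'. \<phi> (z + z') = (\<lambda>x. \<phi> z x * \<phi> z' x)"
    and eta_phi: "\<And>j z. etas j z = \<phi> z (gs j)"
    and Phiu_grp: "\<And>j h. Phiu j [] h = 0"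
    and Phiu_gen: "\<And>j j'. j \<noteq> j' \<Longrightarrow> Phiu j [j'] 0 = 0"
    and Phiu_cop: "\<And>j v v' h h'.
        prod_list (map (\<lambda>y. chis y h) v') * Phiu j (v @ v') (h + h')
        = Phiu j v h * tilde (\<phi> (zs j)) v' h' + unit_f v h * Phiu j v' h'"
    and rho_char: "is_char \<rho>"
begin

abbreviation cv where "cv \<equiv> conv gs chis"
abbreviation T where "T a \<equiv> tilde (\<phi> a)"
abbreviation P where "P w \<equiv> prodf gs chis (map Phiu w)"
abbreviation SS where "SS w \<equiv> PhiSU gs chis zs \<phi> Phiu w 0"
definition gx where "gx j = cv (T (- zs j)) (Phiu j)"

lemma phi0: "\<phi> 0 = (\<lambda>_. 1)"
proof
  fix x
  have "\<phi> 0 x * \<phi> 0 x = \<phi> 0 x * 1" using fun_cong[OF phi_hom[of 0 0], of x] by simp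
  moreover have "\<phi> 0 x \<noteq> 0" using phi_char[of 0] by (simp add: is_char_def)
  ultimately show "\<phi> 0 x = 1" by (metis mult_left_cancel)
qed

lemma T0: "T 0 = unit_f"
  by (simp add: phi0 unit_tilde)

lemma phi_cancel: "\<phi> z x * \<phi> (- z) x = 1"
  using fun_cong[OF phi_hom[of z "- z"], of x] by (simp add: phi0)

lemma chis_nz: "chis j h \<noteq> 0"
  using chi_char[of j] by (simp add: is_char_def)

lemma Phiu_single: "Phiu j [a] h = Phiu j [a] 0 * \<phi> (zs j) h"
proof -
  have e: "prod_list (map (\<lambda>y. chis y 0) []) * Phiu j ([a] @ []) (0 + h)
        = Phiu j [a] 0 * tilde (\<phi> (zs j)) ([] :: 'i list) h + unit_f [a] (0::'g) * Phiu j [] h"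
    by (rule Phiu_cop)
  then show ?thesis unfolding tilde_def unit_f_def by simp
qed

lemma Phiu_long: "Phiu j (a # b # rest) h = 0"
proof -
  have e: "prod_list (map (\<lambda>y. chis y h) (b # rest)) * Phiu j ([a] @ (b # rest)) (h + 0)
        = Phiu j [a] h * tilde (\<phi> (zs j)) (b # rest) 0 + unit_f [a] h * Phiu j (b # rest) 0"
    by (rule Phiu_cop)
  then have "prod_list (map (\<lambda>y. chis y h) (b # rest)) * Phiu j (a # b # rest) h = 0"
    unfolding tilde_def unit_f_def by simp
  moreover have "prod_list (map (\<lambda>y. chis y h) (b # rest)) \<noteq> 0"
    unfolding prod_list_zero_iff using chis_nz by auto
  ultimately show ?thesis by simp
qed

lemma Phiu_supp: "Phiu j v h \<noteq> 0 \<Longrightarrow> v = [j]"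
proof (cases v)
  case Nil
  then show "Phiu j v h \<noteq> 0 \<Longrightarrow> v = [j]" by (simp add: Phiu_grp)
next
  case (Cons a rest)
  assume nz: "Phiu j v h \<noteq> 0"
  show "v = [j]"
  proof (cases rest)
    case Nil
    with nz Cons have "Phiu j [a] h \<noteq> 0" by simp
    then have "Phiu j [a] 0 \<noteq> 0" by (subst (asm) Phiu_single) simp
    then have "a = j" using Phiu_gen[of j a] by metis
    with Cons Nil show ?thesis by simp
  next
    case (Cons b rest')
    with nz \<open>v = a # rest\<close> Phiu_long show ?thesis by simp
  qed
qed

lemma homog_Phiu: "homog gs (gs j) (Phiu j)"
  unfolding homog_def using Phiu_supp by fastforce

lemma homog_P: "homog gs (sum_list (map gs w)) (P w)"
  by (rule homog_prodf) (rule homog_Phiu)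

lemma TP: "cv (T z) (cv (P w) R) = smultf (chw etas w z) (cv (P w) (cv (T z) R))"
proof -
  have "cv (T z) (P w) = smultf (\<phi> z (sum_list (map gs w))) (cv (P w) (T z))"
    by (rule tilde_commute[OF homog_P]) (simp add: char_add[OF phi_char])
  also have "\<phi> z (sum_list (map gs w)) = chw etas w z"
    by (simp add: char_sum[OF phi_char] chw_def eta_phi)
  finally have F: "cv (T z) (P w) = smultf (chw etas w z) (cv (P w) (T z))" .
  show ?thesis by (simp only: conv_assoc[symmetric] F conv_smult_left)
qed

lemma TT: "cv (tilde a) (cv (tilde b) R) = cv (tilde (\<lambda>x. a x * b x)) R"
  by (simp only: conv_assoc[symmetric] conv_tilde_tilde)

lemma chiP0:
  assumes "is_char \<chi>"
  shows "cv (tilde \<chi>) (Phiu i) = smultf (\<chi> (gs i)) (cv (Phiu i) (tilde \<chi>))"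
  by (rule tilde_commute[OF homog_Phiu]) (simp add: char_add[OF assms])

lemma chiP:
  assumes "is_char \<chi>"
  shows "cv (tilde \<chi>) (cv (Phiu i) R) = smultf (\<chi> (gs i)) (cv (Phiu i) (cv (tilde \<chi>) R))"
proof -
  have "cv (tilde \<chi>) (Phiu i) = smultf (\<chi> (gs i)) (cv (Phiu i) (tilde \<chi>))"
    by (rule tilde_commute[OF homog_Phiu]) (simp add: char_add[OF assms])
  then show ?thesis by (simp only: conv_assoc[symmetric] conv_smult_left)
qed

lemma P_single: "P [x] = Phiu x"
  by (simp add: prodf_Cons prodf_Nil conv_unit_right)

lemma SS_eq: "SS w = smultf ((-1) ^ length w) (prodf gs chis (map gx (rev w)))"
proof -
  have "(\<lambda>j. cv (T (- zs j)) (Phiu j)) = gx" by (simp add: fun_eq_iff gx_def)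
  then show ?thesis by (simp add: PhiSU_def T0 conv_unit_left)
qed

lemma SS_Nil: "SS [] = unit_f"
  by (simp add: SS_eq prodf_Nil smultf_one)

lemma SS_Cons: "SS (x # w) = smultf (-1) (cv (SS w) (gx x))"
  by (simp add: SS_eq prodf_append prodf_Cons prodf_Nil conv_unit_right conv_smult_left smultf_smultf)

lemma PhiU_eq: "PhiU gs chis \<phi> Phiu w s = cv (P w) (T s)"
  by (simp add: PhiU_def)


abbreviation AT where "AT w q \<equiv> act_term gs chis zs etas \<phi> Phiu \<rho> w 0 q"

definition Fp where
  "Fp p = (\<lambda>(c, w1, s, w2). smultf (c * \<rho> s) (cv (cv (PhiU gs chis \<phi> Phiu w1 s) p) (SS w2)))"

lemma act0: "AT w p = (\<lambda>X H. sum_list (map (\<lambda>e. Fp p e X H) (cop zs etas w)))"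
  by (simp add: act_term_simp Fp_def smultf_def case_prod_unfold)

lemma act1: "AT [x] q = (\<lambda>X H. - \<rho> (zs x) * cv (cv (T (zs x)) q) (gx x) X H + cv (Phiu x) q X H)"
  by (simp add: act0 Fp_def PhiU_eq SS_Cons SS_Nil prodf_Nil conv_unit_left conv_unit_right T0 P_single
        char_zero[OF rho_char] conv_smult_right smultf_def fun_eq_iff prodf_single conv_neg_right)

lemma phi_sum: "(\<lambda>x. \<phi> z x * \<phi> s x) = \<phi> (z + s)"
  by (simp add: phi_hom)

lemma FpA: "Fp p (c * prod_list (map (\<lambda>y. etas y (zs x)) w1), w1, zs x + s, x # w2)
   = smultf (- \<rho> (zs x)) (cv (cv (T (zs x)) (Fp p (c, w1, s, w2))) (gx x))"
proof -
  have e1: "Fp p (c * prod_list (map (\<lambda>y. etas y (zs x)) w1), w1, zs x + s, x # w2)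
     = smultf (c * prod_list (map (\<lambda>y. etas y (zs x)) w1) * \<rho> (zs x + s) * (-1))
         (cv (P w1) (cv (T (zs x + s)) (cv p (cv (SS w2) (gx x)))))"
    by (simp only: Fp_def prod.case PhiU_eq SS_Cons conv_smult_left conv_smult_right smultf_smultf conv_assoc)
  have e2: "smultf (- \<rho> (zs x)) (cv (cv (T (zs x)) (Fp p (c, w1, s, w2))) (gx x))
     = smultf (- \<rho> (zs x) * (c * \<rho> s * chw etas w1 (zs x)))
         (cv (P w1) (cv (T (zs x + s)) (cv p (cv (SS w2) (gx x)))))"
    by (simp only: Fp_def prod.case PhiU_eq conv_smult_left conv_smult_right smultf_smultf conv_assoc TP TT phi_sum)
  have e3: "c * prod_list (map (\<lambda>y. etas y (zs x)) w1) * \<rho> (zs x + s) * (-1)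
      = - \<rho> (zs x) * (c * \<rho> s * chw etas w1 (zs x))"
    by (simp add: chw_def char_add[OF rho_char] algebra_simps)
  show ?thesis by (simp only: e1 e2 e3)
qed

lemma FpB: "Fp p (c, x # w1, s, w2) = cv (Phiu x) (Fp p (c, w1, s, w2))"
  by (simp only: Fp_def prod.case PhiU_eq list.map prodf_Cons conv_assoc conv_smult_right)

lemma act_cons: "AT (x # w) p = AT [x] (AT w p)"
proof -
  let ?z = "zs x"
  have A: "Fp p (case e of (c, w1, s, w2) \<Rightarrow> (c * prod_list (map (\<lambda>y. etas y (zs x)) w1), w1, zs x + s, x # w2))
     = smultf (- \<rho> ?z) (cv (cv (T ?z) (Fp p e)) (gx x))" for e
    by (cases e) (simp only: prod.case FpA)
  have B: "Fp p (case e of (c, w1, s, w2) \<Rightarrow> (c, x # w1, s, w2)) = cv (Phiu x) (Fp p e)" for e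
    by (cases e) (simp only: prod.case FpB)
  have L: "AT (x # w) p = (\<lambda>X H. sum_list (map (\<lambda>e. - \<rho> ?z * cv (cv (T ?z) (Fp p e)) (gx x) X H) (cop zs etas w))
      + sum_list (map (\<lambda>e. cv (Phiu x) (Fp p e) X H) (cop zs etas w)))"
    by (simp add: act0 map_map o_def A B smultf_def)
  have R: "AT [x] (AT w p) = (\<lambda>X H. - \<rho> ?z * sum_list (map (\<lambda>e. cv (cv (T ?z) (Fp p e)) (gx x) X H) (cop zs etas w))
      + sum_list (map (\<lambda>e. cv (Phiu x) (Fp p e) X H) (cop zs etas w)))"
    unfolding act1 act0[of w] conv_sum_right conv_sum_left ..
  show ?thesis unfolding L R by (simp only: sum_list_const_mult)
qed

lemma act1_smult: "AT [x] (smultf k q) = smultf k (AT [x] q)"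
  by (simp only: act1 conv_smult_left conv_smult_right) (simp add: smultf_def fun_eq_iff algebra_simps)

lemma phi_cancel2: "(\<lambda>x. \<phi> z x * (\<chi> x * \<phi> (- z) x)) = \<chi>"
proof
  fix x show "\<phi> z x * (\<chi> x * \<phi> (- z) x) = \<chi> x"
    using phi_cancel[of z x] by (simp add: algebra_simps)
qed

lemma part_b:
  assumes chi: "is_char \<chi>"
  shows "AT [i] (cv (PhiU gs chis \<phi> Phiu w 0) (tilde \<chi>)) =
    (\<lambda>X H. cv (P (i # w)) (tilde \<chi>) X H
       - (chw etas w (zs i) * \<rho> (zs i) * \<chi> (gs i)) * cv (P (w @ [i])) (tilde \<chi>) X H)"
proof -
  have 1: "cv (cv (T (zs i)) (cv (PhiU gs chis \<phi> Phiu w 0) (tilde \<chi>))) (gx i)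
     = smultf (chw etas w (zs i) * \<chi> (gs i)) (cv (P w) (cv (Phiu i) (tilde \<chi>)))"
    by (simp only: PhiU_eq T0 conv_unit_right gx_def conv_assoc TP TT phi_cancel2 chiP[OF chi] chiP0[OF chi]
         conv_smult_right conv_smult_left smultf_smultf)
  have 2: "cv (P (w @ [i])) (tilde \<chi>) = cv (P w) (cv (Phiu i) (tilde \<chi>))"
    by (simp only: map_append prodf_append P_single conv_assoc)
  have 3: "cv (P (i # w)) (tilde \<chi>) = cv (Phiu i) (cv (PhiU gs chis \<phi> Phiu w 0) (tilde \<chi>))"
    by (simp only: PhiU_eq T0 conv_unit_right list.map prodf_Cons conv_assoc)
  show ?thesis unfolding act1 1 2 3 by (simp add: smultf_def fun_eq_iff algebra_simps)
qed

lemma part_c: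
  assumes chi: "is_char \<chi>"
  shows "AT (replicate t i) (tilde \<chi>) =
    smultf (\<Prod>l<t. 1 - etas i (zs i) ^ l * \<rho> (zs i) * \<chi> (gs i))
      (cv (PhiU gs chis \<phi> Phiu (replicate t i) 0) (tilde \<chi>))"
proof (induction t)
  case 0
  show ?case
    by (simp add: act0 Fp_def PhiU_eq SS_Nil prodf_Nil conv_unit_left conv_unit_right T0
        char_zero[OF rho_char] smultf_def fun_eq_iff)
next
  case (Suc t)
  let ?k = "\<Prod>l<t. 1 - etas i (zs i) ^ l * \<rho> (zs i) * \<chi> (gs i)"
  have r: "replicate t i @ [i] = i # replicate t i" by (simp add: replicate_append_same)
  have "AT (replicate (Suc t) i) (tilde \<chi>) = smultf ?k (AT [i] (cv (PhiU gs chis \<phi> Phiu (replicate t i) 0) (tilde \<chi>)))"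
    by (simp only: replicate_Suc act_cons[of i "replicate t i"] Suc act1_smult)
  also have "\<dots> = smultf ?k (\<lambda>X H. cv (P (i # replicate t i)) (tilde \<chi>) X H
       - (etas i (zs i) ^ t * \<rho> (zs i) * \<chi> (gs i)) * cv (P (i # replicate t i)) (tilde \<chi>) X H)"
    by (simp only: part_b[OF chi] r) (simp add: chw_def)
  also have "\<dots> = smultf (\<Prod>l<Suc t. 1 - etas i (zs i) ^ l * \<rho> (zs i) * \<chi> (gs i))
      (cv (PhiU gs chis \<phi> Phiu (replicate (Suc t) i) 0) (tilde \<chi>))"
    by (simp add: PhiU_eq T0 conv_unit_right smultf_def fun_eq_iff algebra_simps)
  finally show ?case .
qed

end


theorem proposition2p3:
  fixes zs :: "'i::finite \<Rightarrow> 'l::ab_group_add" and gs :: "'i \<Rightarrow> 'g::ab_group_add"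
    and etas :: "'i \<Rightarrow> 'l \<Rightarrow> 'k::field_char_0" and chis :: "'i \<Rightarrow> 'g \<Rightarrow> 'k"
    and \<phi> :: "'l \<Rightarrow> 'g \<Rightarrow> 'k" and ls :: "'i \<Rightarrow> 'k"
    and Phiu :: "'i \<Rightarrow> 'i list \<Rightarrow> 'g \<Rightarrow> 'k"
    and \<rho> :: "'l \<Rightarrow> 'k" and \<chi> :: "'g \<Rightarrow> 'k" and i :: 'i and w :: "'i list"
  assumes alg_closed: "\<forall>p :: 'k poly. degree p > 0 \<longrightarrow> (\<exists>x. poly p x = 0)"
    and eta_char: "\<forall>j. is_char (etas j) \<and> etas j \<noteq> (\<lambda>_. 1)"
    and chi_char: "\<forall>j. is_char (chis j) \<and> chis j \<noteq> (\<lambda>_. 1)"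
    and phi_char: "\<forall>z. is_char (\<phi> z)"
    and phi_hom: "\<forall>z z'. \<phi> (z + z') = (\<lambda>x. \<phi> z x * \<phi> z' x)"
    and phi_z: "\<forall>j. \<phi> (zs j) = (\<lambda>x. inverse (chis j x))"
    and eta_phi: "\<forall>j z. etas j z = \<phi> z (gs j)"
    and ls_nz: "\<forall>j. ls j \<noteq> 0"
    and Phiu_grp: "\<forall>j h. Phiu j [] h = 0"
    and Phiu_gen: "\<forall>j j'. Phiu j [j'] 0 = (if j = j' then ls j else 0)"
    and Phiu_cop: "\<forall>j v v' h h'.
        prod_list (map (\<lambda>y. chis y h) v') * Phiu j (v @ v') (h + h')
        = Phiu j v h * tilde (\<phi> (zs j)) v' h' + unit_f v h * Phiu j v' h'"
    and rho_char: "is_char \<rho>"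
    and chi_char': "is_char \<chi>"
    and w_ne: "w \<noteq> []"
  shows
   "act gs chis zs etas \<phi> Phiu \<rho> [(1, [i], 0)] (tilde \<chi>)
      = smultf (1 - \<rho> (zs i) * \<chi> (gs i)) (conv gs chis (Phiu i) (tilde \<chi>))
    \<and> act gs chis zs etas \<phi> Phiu \<rho> [(1, [i], 0)]
        (conv gs chis (PhiU gs chis \<phi> Phiu w 0) (tilde \<chi>))
      = conv gs chis
          (PhiComb gs chis \<phi> Phiu
             [(1, i # w, 0),
              (- (prod_list (map (\<lambda>r. etas r (zs i)) w) * \<rho> (zs i) * \<chi> (gs i)), w @ [i], 0)])
          (tilde \<chi>)
    \<and> act gs chis zs etas \<phi> Phiu \<rho> [(1, replicate (length w) i, 0)] (tilde \<chi>)
      = smultf (\<Prod>l<length w. 1 - etas i (zs i) ^ l * \<rho> (zs i) * \<chi> (gs i))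
          (conv gs chis (PhiU gs chis \<phi> Phiu (replicate (length w) i) 0) (tilde \<chi>))"
proof -
  interpret setting gs chis zs etas \<phi> Phiu \<rho>
  proof
    show "\<And>j. is_char (chis j)" using chi_char by blast
    show "\<And>z. is_char (\<phi> z)" using phi_char by blast
    show "\<And>z z'. \<phi> (z + z') = (\<lambda>x. \<phi> z x * \<phi> z' x)" using phi_hom by blast
    show "\<And>j z. etas j z = \<phi> z (gs j)" using eta_phi by blast
    show "\<And>j h. Phiu j [] h = 0" using Phiu_grp by blast
    show "\<And>j j'. j \<noteq> j' \<Longrightarrow> Phiu j [j'] 0 = 0" using Phiu_gen by simp
    show "\<And>j v v' h h'. prod_list (map (\<lambda>y. chis y h) v') * Phiu j (v @ v') (h + h')
        = Phiu j v h * tilde (\<phi> (zs j)) v' h' + unit_f v h * Phiu j v' h'" using Phiu_cop by blast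
    show "is_char \<rho>" by (rule rho_char)
  qed
  have c1: "act gs chis zs etas \<phi> Phiu \<rho> [(1, [i], 0)] (tilde \<chi>)
      = smultf (1 - \<rho> (zs i) * \<chi> (gs i)) (conv gs chis (Phiu i) (tilde \<chi>))"
    using part_c[OF chi_char', of 1 i]
    by (simp add: act_single PhiU_eq T0 conv_unit_right prodf_single)
  let ?k = "- (prod_list (map (\<lambda>r. etas r (zs i)) w) * \<rho> (zs i) * \<chi> (gs i))"
  have comb: "PhiComb gs chis \<phi> Phiu [(1, i # w, 0), (?k, w @ [i], 0)]
      = (\<lambda>x h. PhiU gs chis \<phi> Phiu (i # w) 0 x h + smultf ?k (PhiU gs chis \<phi> Phiu (w @ [i]) 0) x h)"
    by (simp add: PhiComb_def smultf_def fun_eq_iff)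
  have c2: "act gs chis zs etas \<phi> Phiu \<rho> [(1, [i], 0)]
        (conv gs chis (PhiU gs chis \<phi> Phiu w 0) (tilde \<chi>))
      = conv gs chis (PhiComb gs chis \<phi> Phiu [(1, i # w, 0), (?k, w @ [i], 0)]) (tilde \<chi>)"
    unfolding act_single part_b[OF chi_char'] comb
    unfolding conv_add_left conv_smult_left PhiU_eq T0 conv_unit_right
    by (simp add: smultf_def chw_def fun_eq_iff)
  have c3: "act gs chis zs etas \<phi> Phiu \<rho> [(1, replicate (length w) i, 0)] (tilde \<chi>)
      = smultf (\<Prod>l<length w. 1 - etas i (zs i) ^ l * \<rho> (zs i) * \<chi> (gs i))
          (conv gs chis (PhiU gs chis \<phi> Phiu (replicate (length w) i) 0) (tilde \<chi>))"
    unfolding act_single by (rule part_c[OF chi_char'])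
  show ?thesis using c1 c2 c3 by blast
qed
end
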